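(* Let $G$ be a finite connected unweighted graph with graph distance $d$, fix a vertex $r$, and let $(a.b)_r=\tfrac12(d(a,r)+d(b,r)-d(a,b))$. For distinct vertices $x,y$ let $f(x,y)=\max_{x=w_1,\dots,w_k=y}\min_{1\le i\le k-1}(w_i.w_{i+1})_r$ (maximum over all finite vertex sequences from $x$ to $y$), and set $f(x,x)=d(x,r)$. Define $d'(x,y)=d(x,r)+d(y,r)-2f(x,y)$ and $(x.y)'_r=\tfrac12\big(d'(x,r)+d'(y,r)-d'(x,y)\big)$. Then: (1) $(x.y)'_r=f(x,y)$ for all vertices $x,y$; (2) $d'(x,y)=0$ (i.e. $x$ and $y$ are mapped to the same vertex of Gromov's distance approximating tree) if and only if $d(x,r)=d(y,r)=m$ for some $m$ and there exists a path $x=w_1,w_2,\dots,w_p=y$ in $G$ such that $d(w_i,r)\ge m$ for all $i$ and $\max\{d(w_i,r),d(w_{i+1},r)\}>m$ for all $1\le i\le p-1$.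
   Context: Gromov's distance approximating tree identifies two vertices $x,y$ of $G$ exactly when $d'(x,y)=0$, where $d'$ is as defined in the claim. *)

theory Defs
  imports Complex_Main
begin

definition simple_graph :: "'a set \<Rightarrow> ('a \<Rightarrow> 'a \<Rightarrow> bool) \<Rightarrow> bool" where
  "simple_graph V E \<longleftrightarrow> finite V \<and> (\<forall>x y. E x y \<longrightarrow> x \<in> V \<and> y \<in> V)
     \<and> (\<forall>x y. E x y \<longrightarrow> E y x) \<and> (\<forall>x. \<not> E x x)"

definition walk :: "'a set \<Rightarrow> ('a \<Rightarrow> 'a \<Rightarrow> bool) \<Rightarrow> 'a list \<Rightarrow> bool" where
  "walk V E ws \<longleftrightarrow> ws \<noteq> [] \<and> set ws \<subseteq> V \<and> (\<forall>i. Suc i < length ws \<longrightarrow> E (ws ! i) (ws ! Suc i))"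

definition connected_graph :: "'a set \<Rightarrow> ('a \<Rightarrow> 'a \<Rightarrow> bool) \<Rightarrow> bool" where
  "connected_graph V E \<longleftrightarrow> V \<noteq> {} \<and>
     (\<forall>x\<in>V. \<forall>y\<in>V. \<exists>ws. walk V E ws \<and> hd ws = x \<and> last ws = y)"

definition gdist :: "'a set \<Rightarrow> ('a \<Rightarrow> 'a \<Rightarrow> bool) \<Rightarrow> 'a \<Rightarrow> 'a \<Rightarrow> nat" where
  "gdist V E x y = (LEAST n. \<exists>ws. walk V E ws \<and> hd ws = x \<and> last ws = y \<and> length ws = Suc n)"

definition gprod :: "'a set \<Rightarrow> ('a \<Rightarrow> 'a \<Rightarrow> bool) \<Rightarrow> 'a \<Rightarrow> 'a \<Rightarrow> 'a \<Rightarrow> real" where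
  "gprod V E r a b = (real (gdist V E a r) + real (gdist V E b r) - real (gdist V E a b)) / 2"

definition fmaxmin :: "'a set \<Rightarrow> ('a \<Rightarrow> 'a \<Rightarrow> bool) \<Rightarrow> 'a \<Rightarrow> 'a \<Rightarrow> 'a \<Rightarrow> real" where
  "fmaxmin V E r x y =
     (if x = y then real (gdist V E x r)
      else Max {Min {gprod V E r (ws ! i) (ws ! Suc i) | i. Suc i < length ws} | ws.
                 set ws \<subseteq> V \<and> 2 \<le> length ws \<and> hd ws = x \<and> last ws = y})"

definition dprime :: "'a set \<Rightarrow> ('a \<Rightarrow> 'a \<Rightarrow> bool) \<Rightarrow> 'a \<Rightarrow> 'a \<Rightarrow> 'a \<Rightarrow> real" where
  "dprime V E r x y = real (gdist V E x r) + real (gdist V E y r) - 2 * fmaxmin V E r x y"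

definition gprod' :: "'a set \<Rightarrow> ('a \<Rightarrow> 'a \<Rightarrow> bool) \<Rightarrow> 'a \<Rightarrow> 'a \<Rightarrow> 'a \<Rightarrow> real" where
  "gprod' V E r x y = (dprime V E r x r + dprime V E r y r - dprime V E r x y) / 2"

end

theory Submission
  imports Defs
begin

lemma walk_succ: "walk V E ws \<longleftrightarrow> ws \<noteq> [] \<and> set ws \<subseteq> V \<and> successively E ws"
  unfolding walk_def successively_conv_nth by blast

lemma succ_app:
  assumes "successively P W1" "successively P W2" "W1 \<noteq> []" "W2 \<noteq> []" "last W1 = hd W2"
  shows "successively P (W1 @ tl W2)" "hd (W1 @ tl W2) = hd W1" "last (W1 @ tl W2) = last W2"
    "set (W1 @ tl W2) \<subseteq> set W1 \<union> set W2"
proof -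
  have e: "W2 = hd W2 # tl W2" using assms by simp
  have "successively P (hd W2 # tl W2)" using assms(2) e by simp
  then have "successively P (tl W2)" "tl W2 = [] \<or> P (hd W2) (hd (tl W2))"
    unfolding successively_Cons by auto
  then show "successively P (W1 @ tl W2)" using assms unfolding successively_append_iff by auto
  show "hd (W1 @ tl W2) = hd W1" using assms by simp
  show "last (W1 @ tl W2) = last W2" using assms e
    by (metis append.right_neutral last_ConsL last_ConsR last_append)
  show "set (W1 @ tl W2) \<subseteq> set W1 \<union> set W2" by (cases W2) auto
qed

context
  fixes V :: "'a set" and E :: "'a \<Rightarrow> 'a \<Rightarrow> bool"
  assumes sg: "simple_graph V E" and cg: "connected_graph V E"
begin

lemma gdist_walk:
  assumes "x \<in> V" "y \<in> V"
  shows "\<exists>ws. walk V E ws \<and> hd ws = x \<and> last ws = y \<and> length ws = Suc (gdist V E x y)"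
proof -
  obtain ws where "walk V E ws \<and> hd ws = x \<and> last ws = y" using cg assms unfolding connected_graph_def by blast
  then have ex: "\<exists>n ws. walk V E ws \<and> hd ws = x \<and> last ws = y \<and> length ws = Suc n"
    by (metis length_0_conv not0_implies_Suc walk_def)
  show ?thesis unfolding gdist_def using LeastI_ex[OF ex] .
qed

lemma gdist_le:
  assumes "walk V E ws" "hd ws = x" "last ws = y"
  shows "gdist V E x y \<le> length ws - 1"
proof -
  have "length ws = Suc (length ws - 1)" using assms(1) by (cases ws) (auto simp: walk_def)
  then have "\<exists>ws'. walk V E ws' \<and> hd ws' = x \<and> last ws' = y \<and> length ws' = Suc (length ws - 1)"
    using assms by blast
  then show ?thesis unfolding gdist_def by (rule Least_le)
qed

lemma gdist_refl: "x \<in> V \<Longrightarrow> gdist V E x x = 0"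
  using gdist_le[of "[x]" x x] by (simp add: walk_def)

lemma gdist_0: "x \<in> V \<Longrightarrow> y \<in> V \<Longrightarrow> gdist V E x y = 0 \<Longrightarrow> x = y"
  using gdist_walk[of x y] by (auto simp: length_Suc_conv)

lemma gdist_sym: assumes "x \<in> V" "y \<in> V" shows "gdist V E x y \<le> gdist V E y x"
proof -
  obtain ws where w: "walk V E ws" "hd ws = y" "last ws = x" "length ws = Suc (gdist V E y x)"
    using gdist_walk assms by blast
  have Es: "\<And>a b. E a b \<Longrightarrow> E b a" using sg unfolding simple_graph_def by blast
  have "walk V E (rev ws)" using w(1) unfolding walk_succ by (auto intro: successively_mono Es)
  moreover have "hd (rev ws) = x" "last (rev ws) = y" using w by (auto simp: hd_rev last_rev)
  ultimately show ?thesis using gdist_le[of "rev ws" x y] w by simp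
qed

lemma gdist_sym': "x \<in> V \<Longrightarrow> y \<in> V \<Longrightarrow> gdist V E x y = gdist V E y x"
  using gdist_sym by (simp add: le_antisym)

lemma gdist_tri: assumes "x \<in> V" "y \<in> V" "z \<in> V"
  shows "gdist V E x z \<le> gdist V E x y + gdist V E y z"
proof -
  obtain w1 where w1: "walk V E w1" "hd w1 = x" "last w1 = y" "length w1 = Suc (gdist V E x y)"
    using gdist_walk assms by blast
  obtain w2 where w2: "walk V E w2" "hd w2 = y" "last w2 = z" "length w2 = Suc (gdist V E y z)"
    using gdist_walk assms by blast
  have ne: "w1 \<noteq> []" "w2 \<noteq> []" using w1 w2 by (auto simp: walk_def)
  have "w2 = y # tl w2" using ne w2 by (cases w2) auto
  have s1: "successively E w1" and s2: "successively E (y # tl w2)" using w1 w2 \<open>w2 = y # tl w2\<close>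
    unfolding walk_succ by auto
  then have "successively E (tl w2)" "tl w2 = [] \<or> E y (hd (tl w2))"
    unfolding successively_Cons by auto
  then have "successively E (w1 @ tl w2)" using s1 w1 ne
    unfolding successively_append_iff by auto
  moreover have "set (w1 @ tl w2) \<subseteq> V" using w1 w2 ne unfolding walk_def by (auto dest: list.set_sel(2))
  ultimately have W: "walk V E (w1 @ tl w2)" using ne by (simp add: walk_succ)
  have "hd (w1 @ tl w2) = x" using ne w1 by simp
  moreover have "last (w1 @ tl w2) = z" using ne w1 w2 \<open>w2 = y # tl w2\<close>
    by (metis last_ConsL last_ConsR last_append list.sel(3) self_append_conv)
  ultimately show ?thesis using gdist_le[OF W] w1 w2 by simp
qed

lemma gdist_edge: "E a b \<Longrightarrow> gdist V E a b = 1"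
proof -
  assume e: "E a b"
  have ab: "a \<in> V" "b \<in> V" "a \<noteq> b" using sg e unfolding simple_graph_def by metis+
  have "walk V E [a,b]" using e ab by (auto simp: walk_def less_Suc_eq)
  then have "gdist V E a b \<le> 1" using gdist_le[of "[a,b]" a b] by simp
  moreover have "gdist V E a b \<noteq> 0" using gdist_0 ab by blast
  ultimately show ?thesis by simp
qed


context
  fixes r :: 'a
  assumes rV: "r \<in> V"
begin

lemma gprod_le1: "a \<in> V \<Longrightarrow> b \<in> V \<Longrightarrow> gprod V E r a b \<le> real (gdist V E a r)"
  using gdist_tri[of b a r] gdist_sym'[of a b] rV unfolding gprod_def by simp

lemma gprod_le2: "a \<in> V \<Longrightarrow> b \<in> V \<Longrightarrow> gprod V E r a b \<le> real (gdist V E b r)"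
  using gdist_tri[of a b r] rV unfolding gprod_def by simp

lemma gprod_r: "a \<in> V \<Longrightarrow> gprod V E r a r = 0"
  using gdist_refl[OF rV] unfolding gprod_def by simp

definition mn :: "'a list \<Rightarrow> real" where
  "mn ws = Min {gprod V E r (ws ! i) (ws ! Suc i) | i. Suc i < length ws}"

lemma mn_fin: "finite {gprod V E r (ws ! i) (ws ! Suc i) | i. Suc i < length ws}"
  by (rule finite_image_set) (rule finite_subset[of _ "{..<length ws}"], auto)

lemma mn_ne: "2 \<le> length ws \<Longrightarrow> {gprod V E r (ws ! i) (ws ! Suc i) | i. Suc i < length ws} \<noteq> {}"
proof -
  assume "2 \<le> length ws" hence "Suc 0 < length ws" by simp
  thus ?thesis by blast
qed

lemma mn_le: "Suc i < length ws \<Longrightarrow> mn ws \<le> gprod V E r (ws ! i) (ws ! Suc i)"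
  unfolding mn_def by (rule Min_le[OF mn_fin]) blast

lemma mn_ge: "2 \<le> length ws \<Longrightarrow> (\<And>i. Suc i < length ws \<Longrightarrow> c \<le> gprod V E r (ws ! i) (ws ! Suc i)) \<Longrightarrow> c \<le> mn ws"
  unfolding mn_def using mn_fin mn_ne by (subst Min_ge_iff) auto

lemma mn_in: "2 \<le> length ws \<Longrightarrow> set ws \<subseteq> V \<Longrightarrow> mn ws \<in> (\<lambda>(a,b). gprod V E r a b) ` (V \<times> V)"
proof -
  assume l: "2 \<le> length ws" and s: "set ws \<subseteq> V"
  have "mn ws \<in> {gprod V E r (ws ! i) (ws ! Suc i) | i. Suc i < length ws}"
    unfolding mn_def using mn_fin mn_ne[OF l] by (rule Min_in)
  then obtain i where "Suc i < length ws" "mn ws = gprod V E r (ws ! i) (ws ! Suc i)" by blast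
  moreover then have "ws ! i \<in> V" "ws ! Suc i \<in> V" using s by (auto dest: nth_mem)
  ultimately show ?thesis by force
qed

lemma f_eq: "x \<noteq> y \<Longrightarrow> fmaxmin V E r x y = Max {mn ws | ws. set ws \<subseteq> V \<and> 2 \<le> length ws \<and> hd ws = x \<and> last ws = y}"
  unfolding fmaxmin_def mn_def by simp

lemma f_fin: "finite {mn ws | ws. set ws \<subseteq> V \<and> 2 \<le> length ws \<and> hd ws = x \<and> last ws = y}"
proof (rule finite_subset)
  show "finite ((\<lambda>(a,b). gprod V E r a b) ` (V \<times> V))" using sg unfolding simple_graph_def by simp
qed (use mn_in in blast)

lemma f_ge: "x \<noteq> y \<Longrightarrow> set ws \<subseteq> V \<Longrightarrow> 2 \<le> length ws \<Longrightarrow> hd ws = x \<Longrightarrow> last ws = y \<Longrightarrow> mn ws \<le> fmaxmin V E r x y"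
  unfolding f_eq by (rule Max_ge[OF f_fin]) blast

lemma f_att: assumes "x \<noteq> y" "x \<in> V" "y \<in> V"
  shows "\<exists>ws. set ws \<subseteq> V \<and> 2 \<le> length ws \<and> hd ws = x \<and> last ws = y \<and> fmaxmin V E r x y = mn ws"
proof -
  have "[x,y] \<in> {ws. set ws \<subseteq> V \<and> 2 \<le> length ws \<and> hd ws = x \<and> last ws = y}" using assms by simp
  then have "{mn ws | ws. set ws \<subseteq> V \<and> 2 \<le> length ws \<and> hd ws = x \<and> last ws = y} \<noteq> {}" by blast
  from Max_in[OF f_fin this] show ?thesis unfolding f_eq[OF assms(1)] by blast
qed

lemma f_r: assumes "x \<in> V" shows "fmaxmin V E r x r = 0"
proof (cases "x = r")
  case True then show ?thesis using gdist_refl rV by (simp add: fmaxmin_def)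
next
  case False
  have "mn [x,r] = 0" using mn_le[of 0 "[x,r]"] mn_ge[of "[x,r]" 0] gprod_r assms
    by (fastforce simp: less_Suc_eq)
  then have ge0: "0 \<le> fmaxmin V E r x r" using f_ge[of x r "[x,r]"] False assms rV by simp
  obtain ws where ws: "set ws \<subseteq> V" "2 \<le> length ws" "hd ws = x" "last ws = r" "fmaxmin V E r x r = mn ws"
    using f_att False assms rV by blast
  have "Suc (length ws - 2) = length ws - 1" "ws \<noteq> []" using ws by auto
  then have "ws ! Suc (length ws - 2) = r" using ws by (simp add: last_conv_nth)
  moreover have "ws ! (length ws - 2) \<in> V" using ws by (auto dest: nth_mem)
  ultimately have "mn ws \<le> 0" using mn_le[of "length ws - 2" ws] gprod_r ws by simp
  then show ?thesis using ws ge0 by simp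
qed

lemma f_le: assumes "x \<in> V" "y \<in> V" shows "fmaxmin V E r x y \<le> gdist V E x r" "fmaxmin V E r x y \<le> gdist V E y r"
proof -
  have "fmaxmin V E r x y \<le> gdist V E x r \<and> fmaxmin V E r x y \<le> gdist V E y r"
  proof (cases "x = y")
    case True then show ?thesis by (simp add: fmaxmin_def)
  next
    case False
    obtain ws where ws: "set ws \<subseteq> V" "2 \<le> length ws" "hd ws = x" "last ws = y" "fmaxmin V E r x y = mn ws"
      using f_att False assms by blast
    have n: "length ws - 2 + 2 = length ws" using ws by simp
    have a: "ws ! 0 = x" using ws by (cases ws) auto
    have "Suc (length ws - 2) = length ws - 1" "ws \<noteq> []" using ws by auto
    then have b: "ws ! Suc (length ws - 2) = y" using ws by (simp add: last_conv_nth)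
    have "ws ! 1 \<in> V" "ws ! (length ws - 2) \<in> V" using ws by (auto dest: nth_mem)
    moreover have "mn ws \<le> gprod V E r (ws ! 0) (ws ! Suc 0)" using ws by (intro mn_le) simp
    moreover have "mn ws \<le> gprod V E r (ws ! (length ws - 2)) (ws ! Suc (length ws - 2))" using ws by (intro mn_le) simp
    ultimately show ?thesis using gprod_le1[of x "ws ! 1"] gprod_le2[of "ws ! (length ws - 2)" y] a b ws assms by simp
  qed
  then show "fmaxmin V E r x y \<le> gdist V E x r" "fmaxmin V E r x y \<le> gdist V E y r" by auto
qed


lemma seg_bounds:
  assumes "a \<in> V" "b \<in> V" "walk V E W" "hd W = a" "last W = b" "length W = Suc (gdist V E a b)" "t < length W"
  shows "gdist V E a r \<le> t + gdist V E (W ! t) r"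
    "gdist V E b r + t \<le> gdist V E a b + gdist V E (W ! t) r"
proof -
  have u: "W ! t \<in> V" using assms unfolding walk_def by (auto dest: nth_mem)
  have ne: "W \<noteq> []" using assms by auto
  have wt: "walk V E (take (Suc t) W)" using assms(3,7) unfolding walk_def
    by (auto dest: in_set_takeD)
  have "hd (take (Suc t) W) = a" using assms ne by (cases W) auto
  moreover have "last (take (Suc t) W) = W ! t" using assms(7) by (simp add: take_Suc_conv_app_nth)
  moreover have "length (take (Suc t) W) = Suc t" using assms(7) by simp
  ultimately have d1: "gdist V E a (W ! t) \<le> t" using gdist_le[OF wt] by simp
  have wd: "walk V E (drop t W)" using assms(3,7) unfolding walk_def
    by (auto dest: in_set_dropD simp: add.commute[of _ t])
  have "hd (drop t W) = W ! t" using assms(7) by (simp add: hd_drop_conv_nth)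
  moreover have "last (drop t W) = b" using assms by simp
  ultimately have d2: "gdist V E (W ! t) b \<le> gdist V E a b - t" using gdist_le[OF wd] assms(6) by simp
  show "gdist V E a r \<le> t + gdist V E (W ! t) r" using gdist_tri[of a "W ! t" r] u d1 assms rV by simp
  have "gdist V E b r \<le> gdist V E b (W ! t) + gdist V E (W ! t) r" using gdist_tri[of b "W ! t" r] u assms rV by simp
  then show "gdist V E b r + t \<le> gdist V E a b + gdist V E (W ! t) r"
    using d2 gdist_sym'[of b "W ! t"] u assms by linarith
qed

lemma seg:
  assumes "a \<in> V" "b \<in> V" "real m \<le> gprod V E r a b"
  shows "\<exists>W. walk V E W \<and> hd W = a \<and> last W = b \<and> (\<forall>w\<in>set W. m \<le> gdist V E w r)
     \<and> (\<forall>i. Suc i < length W \<longrightarrow> m < max (gdist V E (W ! i) r) (gdist V E (W ! Suc i) r))"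
proof -
  obtain W where W: "walk V E W" "hd W = a" "last W = b" "length W = Suc (gdist V E a b)"
    using gdist_walk assms by blast
  have "real (2 * m + gdist V E a b) \<le> real (gdist V E a r + gdist V E b r)"
    using assms(3) unfolding gprod_def by simp
  then have h: "2 * m + gdist V E a b \<le> gdist V E a r + gdist V E b r" by (simp only: of_nat_le_iff)
  have "m \<le> gdist V E w r" if "w \<in> set W" for w
  proof -
    obtain t where t: "t < length W" "w = W ! t" using \<open>w \<in> set W\<close> by (metis in_set_conv_nth)
    then have "m \<le> gdist V E (W ! t) r" using seg_bounds[OF assms(1,2) W, of t] h by linarith
    then show ?thesis using t by simp
  qed
  moreover have "m < max (gdist V E (W ! i) r) (gdist V E (W ! Suc i) r)" if "Suc i < length W" for i
    using seg_bounds[OF assms(1,2) W, of i] seg_bounds[OF assms(1,2) W, of "Suc i"] h that by linarith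
  ultimately show ?thesis using W by blast
qed

lemma chain:
  assumes "set ws \<subseteq> V" "ws \<noteq> []" "\<forall>i. Suc i < length ws \<longrightarrow> real m \<le> gprod V E r (ws ! i) (ws ! Suc i)"
    "m \<le> gdist V E (hd ws) r"
  shows "\<exists>W. walk V E W \<and> hd W = hd ws \<and> last W = last ws \<and> (\<forall>w\<in>set W. m \<le> gdist V E w r)
     \<and> (\<forall>i. Suc i < length W \<longrightarrow> m < max (gdist V E (W ! i) r) (gdist V E (W ! Suc i) r))"
  using assms
proof (induction ws)
  case Nil then show ?case by simp
next
  case (Cons a ws)
  show ?case
  proof (cases ws)
    case Nil
    then show ?thesis using Cons.prems by (intro exI[of _ "[a]"]) (auto simp: walk_def)
  next
    case (Cons b ws')
    have ab: "a \<in> V" "b \<in> V" using Cons Cons.prems by auto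
    have p: "real m \<le> gprod V E r a b" using Cons.prems(3) Cons by force
    obtain W1 where W1: "walk V E W1" "hd W1 = a" "last W1 = b" "\<forall>w\<in>set W1. m \<le> gdist V E w r"
      "\<forall>i. Suc i < length W1 \<longrightarrow> m < max (gdist V E (W1 ! i) r) (gdist V E (W1 ! Suc i) r)"
      using seg[OF ab p] by blast
    have "real m \<le> gdist V E b r" using p gprod_le2[OF ab] by linarith
    moreover have "\<forall>i. Suc i < length ws \<longrightarrow> real m \<le> gprod V E r (ws ! i) (ws ! Suc i)"
      using Cons.prems(3) by force
    ultimately obtain W2 where W2: "walk V E W2" "hd W2 = b" "last W2 = last ws" "\<forall>w\<in>set W2. m \<le> gdist V E w r"
      "\<forall>i. Suc i < length W2 \<longrightarrow> m < max (gdist V E (W2 ! i) r) (gdist V E (W2 ! Suc i) r)"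
      using Cons.IH Cons.prems Cons by auto
    let ?P = "\<lambda>x y. m < max (gdist V E x r) (gdist V E y r)"
    have ne: "W1 \<noteq> []" "W2 \<noteq> []" using W1 W2 by (auto simp: walk_def)
    have s1: "successively E W1" "successively ?P W1" "successively E W2" "successively ?P W2"
      using W1 W2 unfolding walk_succ successively_conv_nth by auto
    have lh: "last W1 = hd W2" using W1 W2 by simp
    note A = succ_app[OF s1(1,3) ne lh] succ_app[OF s1(2,4) ne lh]
    have "walk V E (W1 @ tl W2)" using A W1 W2 ne unfolding walk_succ by auto
    moreover have "\<forall>w\<in>set (W1 @ tl W2). m \<le> gdist V E w r" using A W1 W2 ne by blast
    moreover have "\<forall>i. Suc i < length (W1 @ tl W2) \<longrightarrow> ?P ((W1 @ tl W2) ! i) ((W1 @ tl W2) ! Suc i)"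
      using A W1 W2 ne unfolding successively_conv_nth by simp
    ultimately show ?thesis using A W1 W2 ne Cons by (intro exI[of _ "W1 @ tl W2"]) auto
  qed
qed

end

end


theorem mainTheorem2:
  fixes V :: "'a set" and E :: "'a \<Rightarrow> 'a \<Rightarrow> bool" and r :: 'a
  assumes "simple_graph V E" and "connected_graph V E" and "r \<in> V"
  shows "(\<forall>x\<in>V. \<forall>y\<in>V. gprod' V E r x y = fmaxmin V E r x y)
    \<and> (\<forall>x\<in>V. \<forall>y\<in>V. dprime V E r x y = 0 \<longleftrightarrow>
         (\<exists>m. gdist V E x r = m \<and> gdist V E y r = m \<and>
            (\<exists>ws. walk V E ws \<and> hd ws = x \<and> last ws = y \<and>
               (\<forall>w\<in>set ws. gdist V E w r \<ge> m) \<and>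
               (\<forall>i. Suc i < length ws \<longrightarrow>
                    max (gdist V E (ws ! i) r) (gdist V E (ws ! Suc i) r) > m))))"
proof (intro conjI ballI)
  fix x y assume xy: "x \<in> V" "y \<in> V"
  note sg = assms(1) and cg = assms(2) and rV = assms(3)
  have rr: "gdist V E r r = 0" using gdist_refl[OF sg cg rV] .
  have "dprime V E r x r = gdist V E x r" "dprime V E r y r = gdist V E y r"
    using f_r[OF sg cg rV] xy rr unfolding dprime_def by auto
  then show "gprod' V E r x y = fmaxmin V E r x y" unfolding gprod'_def dprime_def by simp
  have fl: "fmaxmin V E r x y \<le> gdist V E x r" "fmaxmin V E r x y \<le> gdist V E y r"
    using f_le[OF sg cg rV xy] by auto
  show "dprime V E r x y = 0 \<longleftrightarrow>
         (\<exists>m. gdist V E x r = m \<and> gdist V E y r = m \<and>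
            (\<exists>ws. walk V E ws \<and> hd ws = x \<and> last ws = y \<and>
               (\<forall>w\<in>set ws. gdist V E w r \<ge> m) \<and>
               (\<forall>i. Suc i < length ws \<longrightarrow>
                    max (gdist V E (ws ! i) r) (gdist V E (ws ! Suc i) r) > m)))"
  proof (cases "x = y")
    case True
    then show ?thesis using xy
      by (auto simp: dprime_def fmaxmin_def walk_def intro!: exI[of _ "[x]"])
  next
    case False
    show ?thesis
    proof
      assume "dprime V E r x y = 0"
      then have eq: "gdist V E x r = gdist V E y r" "fmaxmin V E r x y = gdist V E x r"
        using fl unfolding dprime_def by linarith+
      obtain ws where ws: "set ws \<subseteq> V" "2 \<le> length ws" "hd ws = x" "last ws = y" "fmaxmin V E r x y = mn V E r ws"
        using f_att[OF sg cg rV False xy] by blast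
      have "\<forall>i. Suc i < length ws \<longrightarrow> real (gdist V E x r) \<le> gprod V E r (ws ! i) (ws ! Suc i)"
        using mn_le[OF sg cg rV] ws eq by auto
      moreover have "ws \<noteq> []" using ws by auto
      ultimately obtain W where "walk V E W \<and> hd W = hd ws \<and> last W = last ws \<and> (\<forall>w\<in>set W. gdist V E x r \<le> gdist V E w r)
     \<and> (\<forall>i. Suc i < length W \<longrightarrow> gdist V E x r < max (gdist V E (W ! i) r) (gdist V E (W ! Suc i) r))"
        using chain[OF sg cg rV ws(1)] ws by blast
      then
      show "\<exists>m. gdist V E x r = m \<and> gdist V E y r = m \<and>
            (\<exists>ws. walk V E ws \<and> hd ws = x \<and> last ws = y \<and>
               (\<forall>w\<in>set ws. gdist V E w r \<ge> m) \<and>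
               (\<forall>i. Suc i < length ws \<longrightarrow>
                    max (gdist V E (ws ! i) r) (gdist V E (ws ! Suc i) r) > m))"
        using ws eq by auto
    next
      assume "\<exists>m. gdist V E x r = m \<and> gdist V E y r = m \<and>
            (\<exists>ws. walk V E ws \<and> hd ws = x \<and> last ws = y \<and>
               (\<forall>w\<in>set ws. gdist V E w r \<ge> m) \<and>
               (\<forall>i. Suc i < length ws \<longrightarrow>
                    max (gdist V E (ws ! i) r) (gdist V E (ws ! Suc i) r) > m))"
      then obtain m ws where m: "gdist V E x r = m" "gdist V E y r = m" "walk V E ws" "hd ws = x" "last ws = y"
        "\<forall>w\<in>set ws. gdist V E w r \<ge> m"
        "\<forall>i. Suc i < length ws \<longrightarrow> max (gdist V E (ws ! i) r) (gdist V E (ws ! Suc i) r) > m"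
        by blast
      have l2: "2 \<le> length ws"
      proof (rule ccontr)
        assume "\<not> 2 \<le> length ws"
        moreover have "ws \<noteq> []" using m by (auto simp: walk_def)
        ultimately obtain a where "ws = [a]" by (cases ws) (auto simp: Suc_le_eq)
        then show False using m False by simp
      qed
      have "real m \<le> gprod V E r (ws ! i) (ws ! Suc i)" if i: "Suc i < length ws" for i
      proof -
        have "E (ws ! i) (ws ! Suc i)" using m(3) i unfolding walk_def by blast
        then have d1: "gdist V E (ws ! i) (ws ! Suc i) = 1" using gdist_edge[OF sg cg] by blast
        have "ws ! i \<in> set ws" "ws ! Suc i \<in> set ws" using i by auto
        then have "m \<le> gdist V E (ws ! i) r" "m \<le> gdist V E (ws ! Suc i) r" using m(6) by auto
        then have "2 * m + 1 \<le> gdist V E (ws ! i) r + gdist V E (ws ! Suc i) r" using m(7) i by auto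
        then have "real (2 * m + 1) \<le> real (gdist V E (ws ! i) r + gdist V E (ws ! Suc i) r)"
          by (simp only: of_nat_le_iff)
        then show ?thesis unfolding gprod_def d1 by simp
      qed
      then have "real m \<le> mn V E r ws" using mn_ge[OF sg cg rV l2] by blast
      moreover have "mn V E r ws \<le> fmaxmin V E r x y"
        using f_ge[OF sg cg rV False _ l2] m(3,4,5) unfolding walk_def by blast
      ultimately show "dprime V E r x y = 0" using fl m unfolding dprime_def by linarith
    qed
  qed
qed

end
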